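(* Let $\Delta$ be a local derivation of $\mathcal{S}$ with $\Delta(L_0)=0$, and let $m\in\mathbb{Z}\setminus\{0\}$. Then $\Delta(L_m)$ lies in the span of $\{L_{km},G_{km}: k\in\mathbb{Z}\}$; i.e. when $\Delta(L_m)$ is written in the basis $\{L_n,G_n\}$, only basis elements with index divisible by $m$ occur with nonzero coefficient.
   Context: $\mathcal{S}$ is the centerless super Virasoro algebra: the Lie superalgebra over $\mathbb{C}$ with basis $\{L_m,G_n: m,n\in\mathbb{Z}\}$, $L_m$ even, $G_n$ odd, and brackets $[L_m,L_n]=(m-n)L_{m+n}$, $[L_m,G_r]=(\frac m2-r)G_{m+r}$, $[G_r,G_s]=2L_{r+s}$. A homogeneous linear map $D$ of parity $|D|$ is a derivation if $D([x,y])=[D(x),y]+(-1)^{|D||x|}[x,D(y)]$ for homogeneous $x,y$; derivations are sums of even and odd ones. A linear map $\Delta:\mathcal{S}\to\mathcal{S}$ is a local derivation if for every $x$ there is a derivation $D_x$ with $\Delta(x)=D_x(x)$. *)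

theory Defs
  imports Complex_Main
begin

text \<open>Elements of the centerless super Virasoro algebra S are represented by their
coefficient functions: x = (a, b) stands for sum_n a n L_n + sum_n b n G_n, with
finitely supported a and b.\<close>

type_synonym sv = "(int \<Rightarrow> complex) \<times> (int \<Rightarrow> complex)"

definition sv_space :: "sv set" where
  "sv_space = {x. finite {n. fst x n \<noteq> 0} \<and> finite {n. snd x n \<noteq> 0}}"

definition sv_zero :: sv where
  "sv_zero = ((\<lambda>n. 0), (\<lambda>n. 0))"

definition sv_add :: "sv \<Rightarrow> sv \<Rightarrow> sv" where
  "sv_add x y = ((\<lambda>n. fst x n + fst y n), (\<lambda>n. snd x n + snd y n))"

definition sv_scale :: "complex \<Rightarrow> sv \<Rightarrow> sv" where
  "sv_scale c x = ((\<lambda>n. c * fst x n), (\<lambda>n. c * snd x n))"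

definition Lb :: "int \<Rightarrow> sv" where
  "Lb m = ((\<lambda>n. if n = m then 1 else 0), (\<lambda>n. 0))"

definition Gb :: "int \<Rightarrow> sv" where
  "Gb m = ((\<lambda>n. 0), (\<lambda>n. if n = m then 1 else 0))"

text \<open>The bracket, extended bilinearly from
 [L_m,L_n]=(m-n)L_{m+n}, [L_m,G_r]=(m/2-r)G_{m+r}, [G_r,L_m]=-(m/2-r)G_{m+r},
 [G_r,G_s]=2L_{r+s}.\<close>
definition sv_br :: "sv \<Rightarrow> sv \<Rightarrow> sv" where
  "sv_br x y =
    ((\<lambda>n. (\<Sum>i\<in>{i. fst x i \<noteq> 0}. fst x i * fst y (n - i) * of_int (i - (n - i)))
         + (\<Sum>r\<in>{r. snd x r \<noteq> 0}. 2 * snd x r * snd y (n - r))),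
     (\<lambda>n. (\<Sum>i\<in>{i. fst x i \<noteq> 0}. fst x i * snd y (n - i) * (of_int i / 2 - of_int (n - i)))
         + (\<Sum>r\<in>{r. snd x r \<noteq> 0}. snd x r * fst y (n - r) * (of_int r - of_int (n - r) / 2))))"

definition sv_homog :: "sv \<Rightarrow> nat \<Rightarrow> bool" where
  "sv_homog x p \<longleftrightarrow> (p = 0 \<and> snd x = (\<lambda>n. 0)) \<or> (p = 1 \<and> fst x = (\<lambda>n. 0))"

definition sv_linear :: "(sv \<Rightarrow> sv) \<Rightarrow> bool" where
  "sv_linear D \<longleftrightarrow> (\<forall>x\<in>sv_space. D x \<in> sv_space) \<and>
     (\<forall>x\<in>sv_space. \<forall>y\<in>sv_space. \<forall>a b.
        D (sv_add (sv_scale a x) (sv_scale b y)) = sv_add (sv_scale a (D x)) (sv_scale b (D y)))"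

definition sv_homog_deriv :: "(sv \<Rightarrow> sv) \<Rightarrow> nat \<Rightarrow> bool" where
  "sv_homog_deriv D p \<longleftrightarrow> p \<in> {0, 1} \<and> sv_linear D \<and>
     (\<forall>x\<in>sv_space. \<forall>q\<in>{0, 1}. sv_homog x q \<longrightarrow> sv_homog (D x) ((p + q) mod 2)) \<and>
     (\<forall>x\<in>sv_space. \<forall>y\<in>sv_space. \<forall>q\<in>{0, 1}. \<forall>q'\<in>{0, 1}.
        sv_homog x q \<longrightarrow> sv_homog y q' \<longrightarrow>
        D (sv_br x y) = sv_add (sv_br (D x) y) (sv_scale ((-1) ^ (p * q)) (sv_br x (D y))))"

definition sv_derivation :: "(sv \<Rightarrow> sv) \<Rightarrow> bool" where
  "sv_derivation D \<longleftrightarrow> (\<exists>D0 D1. sv_homog_deriv D0 0 \<and> sv_homog_deriv D1 1 \<and>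
     (\<forall>x\<in>sv_space. D x = sv_add (D0 x) (D1 x)))"

definition sv_local_derivation :: "(sv \<Rightarrow> sv) \<Rightarrow> bool" where
  "sv_local_derivation \<Delta> \<longleftrightarrow> sv_linear \<Delta> \<and>
     (\<forall>x\<in>sv_space. \<exists>D. sv_derivation D \<and> \<Delta> x = D x)"

end

theory Submission imports Defs "HOL-Computational_Algebra.Polynomial" begin

lemma Lb_space: "Lb j \<in> sv_space"
proof -
  have "{n. fst (Lb j) n \<noteq> 0} = {j}" by (auto simp: Lb_def)
  moreover have "{n. snd (Lb j) n \<noteq> 0} = {}" by (auto simp: Lb_def)
  ultimately show ?thesis by (simp add: sv_space_def)
qed

lemma comb_space:
  assumes "x \<in> sv_space" "y \<in> sv_space"
  shows "sv_add (sv_scale a x) (sv_scale b y) \<in> sv_space"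
proof -
  have "{n. fst (sv_add (sv_scale a x) (sv_scale b y)) n \<noteq> 0} \<subseteq> {n. fst x n \<noteq> 0} \<union> {n. fst y n \<noteq> 0}"
    by (auto simp: sv_add_def sv_scale_def)
  moreover have "{n. snd (sv_add (sv_scale a x) (sv_scale b y)) n \<noteq> 0} \<subseteq> {n. snd x n \<noteq> 0} \<union> {n. snd y n \<noteq> 0}"
    by (auto simp: sv_add_def sv_scale_def)
  ultimately show ?thesis using assms unfolding sv_space_def
    by (auto intro: finite_subset)
qed

lemma lin_scale:
  assumes "sv_linear D" "x \<in> sv_space"
  shows "D (sv_scale a x) = sv_scale a (D x)"
proof -
  have e: "\<And>w. sv_add (sv_scale a w) (sv_scale 0 w) = sv_scale a w" by (simp add: sv_add_def sv_scale_def)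
  from assms have "D (sv_add (sv_scale a x) (sv_scale 0 x)) = sv_add (sv_scale a (D x)) (sv_scale 0 (D x))"
    unfolding sv_linear_def by blast
  thus ?thesis by (simp add: e)
qed

lemma br_right_fst:
  assumes "w \<in> sv_space"
  shows "fst (sv_br w (Lb j)) n = fst w (n-j) * of_int (n - 2*j)"
proof -
  have fin: "finite {i. fst w i \<noteq> 0}" using assms by (simp add: sv_space_def)
  have "(\<Sum>i\<in>{i. fst w i \<noteq> 0}. fst w i * fst (Lb j) (n - i) * of_int (i - (n - i)))
     = (\<Sum>i\<in>{i. fst w i \<noteq> 0}. if i = n - j then fst w i * of_int (i - (n-i)) else 0)"
    by (rule sum.cong) (auto simp: Lb_def)
  also have "\<dots> = (if n - j \<in> {i. fst w i \<noteq> 0} then fst w (n-j) * of_int ((n-j) - (n - (n-j))) else 0)"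
    using fin by (simp add: sum.delta)
  also have "\<dots> = fst w (n-j) * of_int (n - 2*j)" by auto
  finally show ?thesis by (simp add: sv_br_def Lb_def)
qed

lemma br_right_snd:
  assumes "w \<in> sv_space"
  shows "snd (sv_br w (Lb j)) n = snd w (n-j) * (of_int (n-j) - of_int j / 2)"
proof -
  have fin: "finite {i. snd w i \<noteq> 0}" using assms by (simp add: sv_space_def)
  have "(\<Sum>r\<in>{r. snd w r \<noteq> 0}. snd w r * fst (Lb j) (n - r) * (of_int r - of_int (n - r) / 2))
     = (\<Sum>r\<in>{r. snd w r \<noteq> 0}. if r = n - j then snd w r * (of_int r - of_int (n - r) / 2) else 0)"
    by (rule sum.cong) (auto simp: Lb_def)
  also have "\<dots> = (if n - j \<in> {r. snd w r \<noteq> 0} then snd w (n-j) * (of_int (n-j) - of_int (n - (n-j)) / 2) else 0)"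
    using fin by (simp add: sum.delta)
  also have "\<dots> = snd w (n-j) * (of_int (n-j) - of_int j / 2)" by auto
  finally show ?thesis by (simp add: sv_br_def Lb_def)
qed

lemma supp_L0: "{i. fst (Lb 0) i \<noteq> 0} = {0}" "{i. snd (Lb 0) i \<noteq> 0} = {}"
  by (auto simp: Lb_def)

lemma br_left_fst: "fst (sv_br (Lb 0) v) n = - of_int n * fst v n"
  unfolding sv_br_def by (simp add: supp_L0) (simp add: Lb_def)

lemma br_left_snd: "snd (sv_br (Lb 0) v) n = - of_int n * snd v n"
  unfolding sv_br_def by (simp add: supp_L0) (simp add: Lb_def)

lemma br_L0_Lj: "sv_br (Lb 0) (Lb j) = sv_scale (- of_int j) (Lb j)"
proof -
  have "fst (sv_br (Lb 0) (Lb j)) = fst (sv_scale (- of_int j) (Lb j))"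
    by (rule ext) (simp only: br_left_fst, simp add: sv_scale_def Lb_def)
  moreover have "snd (sv_br (Lb 0) (Lb j)) = snd (sv_scale (- of_int j) (Lb j))"
    by (rule ext) (simp only: br_left_snd, simp add: sv_scale_def Lb_def)
  ultimately show ?thesis by (simp add: prod_eq_iff)
qed


lemma homog_Lb: "sv_homog (Lb j) 0" by (simp add: sv_homog_def Lb_def)

lemma hd_comp:
  assumes "sv_homog_deriv E p"
  shows "fst (E (Lb j)) n * of_int (n - j) = fst (E (Lb 0)) (n - j) * of_int (n - 2*j)"
    and "snd (E (Lb j)) n * of_int (n - j) = snd (E (Lb 0)) (n - j) * (of_int (n-j) - of_int j / 2)"
proof -
  have lin: "sv_linear E" using assms by (simp add: sv_homog_deriv_def)
  have sp0: "E (Lb 0) \<in> sv_space" using lin Lb_space by (simp add: sv_linear_def)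
  have "E (sv_br (Lb 0) (Lb j)) = sv_add (sv_br (E (Lb 0)) (Lb j)) (sv_scale ((-1) ^ (p * 0)) (sv_br (Lb 0) (E (Lb j))))"
    using assms Lb_space homog_Lb unfolding sv_homog_deriv_def by blast
  hence eq: "sv_scale (- of_int j) (E (Lb j)) = sv_add (sv_br (E (Lb 0)) (Lb j)) (sv_scale 1 (sv_br (Lb 0) (E (Lb j))))"
    by (simp add: br_L0_Lj lin_scale[OF lin Lb_space])
  have "- of_int j * fst (E (Lb j)) n = fst (E (Lb 0)) (n - j) * of_int (n - 2*j) + (- of_int n * fst (E (Lb j)) n)"
    using arg_cong[OF eq, of "\<lambda>x. fst x n"] by (simp add: sv_add_def sv_scale_def br_left_fst br_right_fst[OF sp0])
  thus "fst (E (Lb j)) n * of_int (n - j) = fst (E (Lb 0)) (n - j) * of_int (n - 2*j)"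
    by (simp add: algebra_simps)
  have "- of_int j * snd (E (Lb j)) n = snd (E (Lb 0)) (n - j) * (of_int (n-j) - of_int j / 2) + (- of_int n * snd (E (Lb j)) n)"
    using arg_cong[OF eq, of "\<lambda>x. snd x n"] by (simp add: sv_add_def sv_scale_def br_left_snd br_right_snd[OF sp0])
  thus "snd (E (Lb j)) n * of_int (n - j) = snd (E (Lb 0)) (n - j) * (of_int (n-j) - of_int j / 2)"
    by (simp add: algebra_simps)
qed

lemma lin_comb:
  assumes "sv_linear D" "x \<in> sv_space" "y \<in> sv_space"
  shows "D (sv_add (sv_scale a x) (sv_scale b y)) = sv_add (sv_scale a (D x)) (sv_scale b (D y))"
  using assms unfolding sv_linear_def by blast

lemma loc:
  assumes "sv_local_derivation \<Delta>"
  shows "\<exists>u. finite {n. fst u n \<noteq> 0} \<and> finite {n. snd u n \<noteq> 0} \<and>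
    (\<forall>n. n \<noteq> j1 \<longrightarrow> n \<noteq> j2 \<longrightarrow>
       c1 * fst (\<Delta> (Lb j1)) n + c2 * fst (\<Delta> (Lb j2)) n =
       c1 * (fst u (n - j1) * of_int (n - 2*j1) / of_int (n - j1))
     + c2 * (fst u (n - j2) * of_int (n - 2*j2) / of_int (n - j2))) \<and>
    (\<forall>n. n \<noteq> j1 \<longrightarrow> n \<noteq> j2 \<longrightarrow>
       c1 * snd (\<Delta> (Lb j1)) n + c2 * snd (\<Delta> (Lb j2)) n =
       c1 * (snd u (n - j1) * (of_int (n - j1) - of_int j1 / 2) / of_int (n - j1))
     + c2 * (snd u (n - j2) * (of_int (n - j2) - of_int j2 / 2) / of_int (n - j2)))"
proof -
  define x where "x = sv_add (sv_scale c1 (Lb j1)) (sv_scale c2 (Lb j2))"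
  have xs: "x \<in> sv_space" unfolding x_def by (intro comb_space Lb_space)
  have linD: "sv_linear \<Delta>" using assms by (simp add: sv_local_derivation_def)
  have dx: "\<Delta> x = sv_add (sv_scale c1 (\<Delta> (Lb j1))) (sv_scale c2 (\<Delta> (Lb j2)))"
    unfolding x_def by (rule lin_comb[OF linD Lb_space Lb_space])
  obtain D where D: "sv_derivation D" "\<Delta> x = D x" using assms xs by (auto simp: sv_local_derivation_def)
  obtain D0 D1 where H0: "sv_homog_deriv D0 0" and H1: "sv_homog_deriv D1 1"
    and DD: "\<forall>x\<in>sv_space. D x = sv_add (D0 x) (D1 x)" using D(1) by (auto simp: sv_derivation_def)
  have l0: "sv_linear D0" using H0 by (simp add: sv_homog_deriv_def)
  have l1: "sv_linear D1" using H1 by (simp add: sv_homog_deriv_def)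
  define u where "u = sv_add (D0 (Lb 0)) (D1 (Lb 0))"
  have s0: "D0 (Lb 0) \<in> sv_space" using l0 Lb_space by (simp add: sv_linear_def)
  have s1: "D1 (Lb 0) \<in> sv_space" using l1 Lb_space by (simp add: sv_linear_def)
  have us: "u \<in> sv_space"
  proof -
    have "u = sv_add (sv_scale 1 (D0 (Lb 0))) (sv_scale 1 (D1 (Lb 0)))"
      by (simp add: u_def sv_add_def sv_scale_def)
    thus ?thesis using comb_space[OF s0 s1] by simp
  qed
  have Dx: "D x = sv_add (sv_add (sv_scale c1 (D0 (Lb j1))) (sv_scale c2 (D0 (Lb j2))))
                         (sv_add (sv_scale c1 (D1 (Lb j1))) (sv_scale c2 (D1 (Lb j2))))"
    using DD xs unfolding x_def by (simp add: lin_comb[OF l0 Lb_space Lb_space] lin_comb[OF l1 Lb_space Lb_space])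
  have key: "\<Delta> x = D x" by (rule D(2))
  have fD: "fst (E (Lb j)) n = fst (E (Lb 0)) (n - j) * of_int (n - 2*j) / of_int (n - j)"
    "snd (E (Lb j)) n = snd (E (Lb 0)) (n - j) * (of_int (n-j) - of_int j / 2) / of_int (n - j)"
    if "sv_homog_deriv E p" "n \<noteq> j" for E p j n
    using hd_comp[OF that(1), of j n] that(2) by (simp_all add: eq_divide_eq)
  show ?thesis
  proof (intro exI conjI allI impI)
    show "finite {n. fst u n \<noteq> 0}" "finite {n. snd u n \<noteq> 0}" using us by (auto simp: sv_space_def)
  next
    fix n assume n: "n \<noteq> j1" "n \<noteq> j2"
    have "fst (\<Delta> x) n = fst (D x) n" by (simp add: key)
    thus "c1 * fst (\<Delta> (Lb j1)) n + c2 * fst (\<Delta> (Lb j2)) n =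
       c1 * (fst u (n - j1) * of_int (n - 2*j1) / of_int (n - j1))
     + c2 * (fst u (n - j2) * of_int (n - 2*j2) / of_int (n - j2))"
      unfolding dx Dx
      by (simp add: sv_add_def sv_scale_def u_def fD[OF H0 n(1)] fD[OF H1 n(1)] fD[OF H0 n(2)] fD[OF H1 n(2)] add_divide_distrib distrib_left distrib_right)
  next
    fix n assume n: "n \<noteq> j1" "n \<noteq> j2"
    have "snd (\<Delta> x) n = snd (D x) n" by (simp add: key)
    thus "c1 * snd (\<Delta> (Lb j1)) n + c2 * snd (\<Delta> (Lb j2)) n =
       c1 * (snd u (n - j1) * (of_int (n - j1) - of_int j1 / 2) / of_int (n - j1))
     + c2 * (snd u (n - j2) * (of_int (n - j2) - of_int j2 / 2) / of_int (n - j2))"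
      unfolding dx Dx
      by (simp add: sv_add_def sv_scale_def u_def fD[OF H0 n(1)] fD[OF H1 n(1)] fD[OF H0 n(2)] fD[OF H1 n(2)] add_divide_distrib distrib_left distrib_right)
  qed
qed


primrec Pch :: "(nat \<Rightarrow> complex) \<Rightarrow> (nat \<Rightarrow> complex) \<Rightarrow> (nat \<Rightarrow> complex) \<Rightarrow> nat \<Rightarrow> complex poly" where
  "Pch A \<alpha> \<beta> 0 = [: A 0 / \<alpha> 0 :]"
| "Pch A \<alpha> \<beta> (Suc k) = [: A (Suc k) / \<alpha> (Suc k) :] - smult (\<beta> (Suc k) / \<alpha> (Suc k)) (pCons 0 (Pch A \<alpha> \<beta> k))"

lemma chain_nat:
  fixes A \<alpha> \<beta> :: "nat \<Rightarrow> complex"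
  assumes fin: "finite {k. A k \<noteq> 0}"
    and al: "\<And>k. \<alpha> k \<noteq> 0" and be: "\<And>k. \<beta> (Suc k) \<noteq> 0"
    and ex: "\<And>c. c \<noteq> 0 \<Longrightarrow> \<exists>U. finite {k. U k \<noteq> 0} \<and> c * A 0 = \<alpha> 0 * U 0 \<and>
              (\<forall>k. c * A (Suc k) = \<alpha> (Suc k) * U (Suc k) + c * \<beta> (Suc k) * U k)"
  shows "A k = 0"
proof -
  let ?P = "Pch A \<alpha> \<beta>"
  obtain N where N: "\<And>k. k \<ge> N \<Longrightarrow> A k = 0"
    using fin by (metis (mono_tags, lifting) finite_nat_set_iff_bounded mem_Collect_eq not_less)
  have PN: "poly (?P N) c = 0" if c: "c \<noteq> 0" for c
  proof -
    obtain U where U: "finite {k. U k \<noteq> 0}" "c * A 0 = \<alpha> 0 * U 0"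
      "\<And>k. c * A (Suc k) = \<alpha> (Suc k) * U (Suc k) + c * \<beta> (Suc k) * U k" using ex[OF c] by blast
    have UP: "U k = c * poly (?P k) c" for k
    proof (induction k)
      case 0 then show ?case using U(2) al[of 0] by (simp add: field_simps)
    next
      case (Suc k)
      have "U (Suc k) = (c * A (Suc k) - c * \<beta> (Suc k) * U k) / \<alpha> (Suc k)"
        using U(3)[of k] al[of "Suc k"] by (simp add: field_simps)
      then show ?case using Suc.IH al[of "Suc k"] by (simp add: field_simps)
    qed
    have "U N = 0"
    proof (rule ccontr)
      assume h: "U N \<noteq> 0"
      have "U (N + i) \<noteq> 0" for i
      proof (induction i)
        case 0 then show ?case using h by simp
      next
        case (Suc i)
        have "0 = \<alpha> (Suc (N+i)) * U (Suc (N+i)) + c * \<beta> (Suc (N+i)) * U (N+i)"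
          using U(3)[of "N+i"] N[of "Suc (N+i)"] by simp
        moreover have "c * \<beta> (Suc (N+i)) * U (N+i) \<noteq> 0" using c be Suc.IH by simp
        ultimately have "U (Suc (N+i)) \<noteq> 0" by auto
        then show ?case by simp
      qed
      hence "{N..} \<subseteq> {k. U k \<noteq> 0}" by (auto simp: le_iff_add)
      hence "finite {N..}" using U(1) finite_subset by blast
      thus False using infinite_Ici[of N] by simp
    qed
    thus ?thesis using UP[of N] c by simp
  qed
  have P0: "?P N = 0"
  proof (rule ccontr)
    assume "?P N \<noteq> 0"
    hence "finite {c. poly (?P N) c = 0}" by (rule poly_roots_finite)
    moreover have "UNIV - {0} \<subseteq> {c. poly (?P N) c = 0}" using PN by auto
    ultimately have "finite (UNIV - {0::complex})" using finite_subset by blast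
    thus False by (simp add: infinite_UNIV_char_0)
  qed
  have down: "?P (N - i) = 0" for i
  proof (induction i)
    case 0 then show ?case using P0 by simp
  next
    case (Suc i)
    show ?case
    proof (cases "N - i")
      case 0 then show ?thesis using Suc.IH by (simp add: diff_Suc)
    next
      case (Suc k)
      have "N - Suc i = k" using Suc by simp
      have h: "?P (Suc k) = 0" using Suc.IH Suc by simp
      hence "coeff (?P (Suc k)) 0 = 0" by simp
      hence a0: "A (Suc k) = 0" using al[of "Suc k"] by simp
      hence "smult (\<beta> (Suc k) / \<alpha> (Suc k)) (pCons 0 (?P k)) = 0" using h by simp
      hence "?P k = 0" using al[of "Suc k"] be[of k] by simp
      then show ?thesis using \<open>N - Suc i = k\<close> by simp
    qed
  qed
  show ?thesis
  proof (cases "k \<ge> N")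
    case True then show ?thesis using N by simp
  next
    case False
    have "?P k = 0" using down[of "N - k"] False by simp
    hence "coeff (?P k) 0 = 0" by simp
    thus ?thesis using al[of k] by (cases k) simp_all
  qed
qed


lemma chain_Z:
  fixes A \<alpha> \<beta> :: "int \<Rightarrow> complex"
  assumes fin: "finite {j. A j \<noteq> 0}"
    and al: "\<And>j. \<alpha> j \<noteq> 0" and be: "\<And>j. \<beta> j \<noteq> 0"
    and ex: "\<And>c. c \<noteq> 0 \<Longrightarrow> \<exists>U. finite {j. U j \<noteq> 0} \<and>
              (\<forall>j. c * A j = \<alpha> j * U j + c * \<beta> j * U (j - 1))"
  shows "A j = 0"
proof -
  define S where "S = {j. A j \<noteq> 0}"
  define J0 where "J0 = (if S = {} then j else min j (Min S))"
  have J0j: "J0 \<le> j" by (simp add: J0_def)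
  have below: "A i = 0" if "i < J0" for i
  proof (rule ccontr)
    assume "A i \<noteq> 0"
    hence "i \<in> S" "S \<noteq> {}" by (auto simp: S_def)
    hence "Min S \<le> i" using fin S_def by simp
    thus False using that \<open>S \<noteq> {}\<close> by (simp add: J0_def)
  qed
  let ?A = "\<lambda>k::nat. A (J0 + int k)"
  let ?a = "\<lambda>k::nat. \<alpha> (J0 + int k)"
  let ?b = "\<lambda>k::nat. \<beta> (J0 + int k)"
  have inj: "inj (\<lambda>k::nat. J0 + int k)" by (auto simp: inj_def)
  have finA: "finite {k. ?A k \<noteq> 0}"
  proof -
    have "{k. ?A k \<noteq> 0} = (\<lambda>k::nat. J0 + int k) -` {j. A j \<noteq> 0}" by auto
    thus ?thesis using finite_vimageI[OF fin inj] by simp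
  qed
  have "?A k = 0" for k
  proof (rule chain_nat[of ?A ?a ?b])
    show "finite {k. ?A k \<noteq> 0}" by (rule finA)
    show "\<And>k. ?a k \<noteq> 0" using al by simp
    show "\<And>k. ?b (Suc k) \<noteq> 0" using be by simp
  next
    fix c :: complex assume c: "c \<noteq> 0"
    obtain U where U: "finite {j. U j \<noteq> 0}" "\<And>j. c * A j = \<alpha> j * U j + c * \<beta> j * U (j - 1)"
      using ex[OF c] by blast
    have Ub: "U i = 0" if "i < J0" for i
    proof (rule ccontr)
      assume "U i \<noteq> 0"
      define T where "T = {i. U i \<noteq> 0 \<and> i < J0}"
      have fT: "finite T" using U(1) by (rule finite_subset[rotated]) (auto simp: T_def)
      have neT: "T \<noteq> {}" using \<open>U i \<noteq> 0\<close> that by (auto simp: T_def)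
      define i0 where "i0 = Min T"
      have i0T: "i0 \<in> T" using fT neT by (simp add: i0_def)
      have "U (i0 - 1) = 0"
      proof (rule ccontr)
        assume "U (i0 - 1) \<noteq> 0"
        hence "i0 - 1 \<in> T" using i0T by (auto simp: T_def)
        hence "i0 \<le> i0 - 1" using fT unfolding i0_def by (rule Min_le[rotated])
        thus False by simp
      qed
      moreover have "A i0 = 0" using i0T below by (auto simp: T_def)
      ultimately have "\<alpha> i0 * U i0 = 0" using U(2)[of i0] by simp
      thus False using al[of i0] i0T by (auto simp: T_def)
    qed
    show "\<exists>U. finite {k. U k \<noteq> 0} \<and> c * ?A 0 = ?a 0 * U 0 \<and>
              (\<forall>k. c * ?A (Suc k) = ?a (Suc k) * U (Suc k) + c * ?b (Suc k) * U k)"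
    proof (intro exI conjI allI)
      have "{k. U (J0 + int k) \<noteq> 0} = (\<lambda>k::nat. J0 + int k) -` {j. U j \<noteq> 0}" by auto
      thus "finite {k. U (J0 + int k) \<noteq> 0}" using finite_vimageI[OF U(1) inj] by simp
      show "c * ?A 0 = ?a 0 * U (J0 + int 0)" using U(2)[of J0] Ub[of "J0 - 1"] by simp
      fix k
      have "J0 + int (Suc k) - 1 = J0 + int k" by simp
      thus "c * ?A (Suc k) = ?a (Suc k) * U (J0 + int (Suc k)) + c * ?b (Suc k) * U (J0 + int k)"
        using U(2)[of "J0 + int (Suc k)"] by simp
    qed
  qed
  from this[of "nat (j - J0)"] show ?thesis using J0j by simp
qed


lemma half_ne: "2*X \<noteq> Y \<Longrightarrow> (of_int X - of_int Y / 2 :: complex) \<noteq> 0"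
proof
  assume "2*X \<noteq> Y" "(of_int X - of_int Y / 2 :: complex) = 0"
  hence "(of_int (2*X) :: complex) = of_int Y" by (simp add: field_simps)
  hence "2*X = Y" by (simp only: of_int_eq_iff)
  thus False using \<open>2*X \<noteq> Y\<close> by simp
qed

lemma space_fin: "x \<in> sv_space \<Longrightarrow> finite {n. fst x n \<noteq> 0} \<and> finite {n. snd x n \<noteq> 0}"
  by (simp add: sv_space_def)

lemma fin_shift:
  assumes "finite {n. f n \<noteq> (0::complex)}" "(m::int) \<noteq> 0"
  shows "finite {j. f (n + j*m) \<noteq> 0}"
proof -
  have inj: "inj (\<lambda>j. n + j*m)" using assms(2) by (auto simp: inj_def)
  have "{j. f (n + j*m) \<noteq> 0} = (\<lambda>j. n + j*m) -` {n. f n \<noteq> 0}" by auto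
  thus ?thesis using finite_vimageI[OF assms(1) inj] by simp
qed

lemma S1:
  assumes LD: "sv_local_derivation \<Delta>" and Z: "\<Delta> (Lb 0) = sv_zero" and m: "m \<noteq> 0"
    and nd: "\<not> m dvd n"
  shows "fst (\<Delta> (Lb m)) n = 0"
    and "(\<forall>j. 2*(n + j*m) \<noteq> 3*m) \<Longrightarrow> snd (\<Delta> (Lb m)) n = 0"
proof -
  have linD: "sv_linear \<Delta>" using LD by (simp add: sv_local_derivation_def)
  have as: "\<Delta> (Lb m) \<in> sv_space" using linD Lb_space by (simp add: sv_linear_def)
  have ndt: "n + t*m \<noteq> 0" for t
  proof
    assume "n + t*m = 0"
    hence "n = (-t)*m" by simp
    thus False using nd by simp
  qed
  have idx: "n + (j - 1) * m = n + j*m - m" for j by (simp add: algebra_simps)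
  have LOC: "\<exists>u. finite {n. fst u n \<noteq> 0} \<and> finite {n. snd u n \<noteq> 0} \<and>
    (\<forall>j. c * fst (\<Delta> (Lb m)) (n + j*m) = fst u (n + j*m) + c * (of_int (n + j*m - 2*m) / of_int (n + j*m - m)) * fst u (n + (j-1)*m)) \<and>
    (\<forall>j. c * snd (\<Delta> (Lb m)) (n + j*m) = snd u (n + j*m) + c * ((of_int (n + j*m - m) - of_int m / 2) / of_int (n + j*m - m)) * snd u (n + (j-1)*m))" for c
  proof -
    obtain u where u: "finite {n. fst u n \<noteq> 0}" "finite {n. snd u n \<noteq> 0}"
      "\<And>n. n \<noteq> 0 \<Longrightarrow> n \<noteq> m \<Longrightarrow>
       1 * fst (\<Delta> (Lb 0)) n + c * fst (\<Delta> (Lb m)) n =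
       1 * (fst u (n - 0) * of_int (n - 2*0) / of_int (n - 0))
     + c * (fst u (n - m) * of_int (n - 2*m) / of_int (n - m))"
      "\<And>n. n \<noteq> 0 \<Longrightarrow> n \<noteq> m \<Longrightarrow>
       1 * snd (\<Delta> (Lb 0)) n + c * snd (\<Delta> (Lb m)) n =
       1 * (snd u (n - 0) * (of_int (n - 0) - of_int 0 / 2) / of_int (n - 0))
     + c * (snd u (n - m) * (of_int (n - m) - of_int m / 2) / of_int (n - m))"
      using loc[OF LD, of 0 m 1 c] by blast
    show ?thesis
    proof (intro exI conjI allI)
      fix j
      have n0: "n + j*m \<noteq> 0" by (rule ndt)
      have n1: "n + j*m \<noteq> m" using ndt[of "j - 1"] by (simp add: algebra_simps)
      have n0c: "(of_int (n + j*m) :: complex) \<noteq> 0" by (metis n0 of_int_eq_0_iff)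
      show "c * fst (\<Delta> (Lb m)) (n + j*m) = fst u (n + j*m) + c * (of_int (n + j*m - 2*m) / of_int (n + j*m - m)) * fst u (n + (j-1)*m)"
        using u(3)[OF n0 n1] n0c Z unfolding idx by (simp add: sv_zero_def del: of_int_add of_int_mult of_int_diff)
      show "c * snd (\<Delta> (Lb m)) (n + j*m) = snd u (n + j*m) + c * ((of_int (n + j*m - m) - of_int m / 2) / of_int (n + j*m - m)) * snd u (n + (j-1)*m)"
        using u(4)[OF n0 n1] n0c Z unfolding idx by (simp add: sv_zero_def del: of_int_add of_int_mult of_int_diff)
    qed (use u in auto)
  qed
  have "fst (\<Delta> (Lb m)) (n + 0*m) = 0"
  proof (rule chain_Z[where A = "\<lambda>j. fst (\<Delta> (Lb m)) (n + j*m)" and j = 0 and \<alpha> = "\<lambda>_. 1" and \<beta> = "\<lambda>j. of_int (n + j*m - 2*m) / of_int (n + j*m - m)"])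
    show "finite {j. fst (\<Delta> (Lb m)) (n + j*m) \<noteq> 0}" using fin_shift space_fin[OF as] m by blast
    show "\<And>j. (1::complex) \<noteq> 0" by simp
    fix j
    have a: "n + j*m - 2*m \<noteq> 0" using ndt[of "j - 2"] by (simp add: algebra_simps)
    have b: "n + j*m - m \<noteq> 0" using ndt[of "j - 1"] by (simp add: algebra_simps)
    have a': "(of_int (n + j*m - 2*m) :: complex) \<noteq> 0" by (metis a of_int_eq_0_iff)
    have b': "(of_int (n + j*m - m) :: complex) \<noteq> 0" by (metis b of_int_eq_0_iff)
    show "(of_int (n + j*m - 2*m) / of_int (n + j*m - m) :: complex) \<noteq> 0" using a' b' by simp
  next
    fix c :: complex assume "c \<noteq> 0"
    from LOC[of c] obtain u where u: "finite {n. fst u n \<noteq> 0}" "finite {n. snd u n \<noteq> 0}"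
      "\<forall>j. c * fst (\<Delta> (Lb m)) (n + j*m) = fst u (n + j*m) + c * (of_int (n + j*m - 2*m) / of_int (n + j*m - m)) * fst u (n + (j-1)*m)"
      "\<forall>j. c * snd (\<Delta> (Lb m)) (n + j*m) = snd u (n + j*m) + c * ((of_int (n + j*m - m) - of_int m / 2) / of_int (n + j*m - m)) * snd u (n + (j-1)*m)"
      by blast
    show "\<exists>U. finite {j. U j \<noteq> 0} \<and> (\<forall>j. c * fst (\<Delta> (Lb m)) (n + j*m) = 1 * U j + c * (of_int (n + j*m - 2*m) / of_int (n + j*m - m)) * U (j - 1))"
      by (rule exI[of _ "\<lambda>j. fst u (n + j*m)"]) (use u fin_shift m in auto)
  qed
  thus "fst (\<Delta> (Lb m)) n = 0" by simp
  assume H: "\<forall>j. 2*(n + j*m) \<noteq> 3*m"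
  have "snd (\<Delta> (Lb m)) (n + 0*m) = 0"
  proof (rule chain_Z[where A = "\<lambda>j. snd (\<Delta> (Lb m)) (n + j*m)" and j = 0 and \<alpha> = "\<lambda>_. 1" and \<beta> = "\<lambda>j. (of_int (n + j*m - m) - of_int m / 2) / of_int (n + j*m - m)"])
    show "finite {j. snd (\<Delta> (Lb m)) (n + j*m) \<noteq> 0}" using fin_shift space_fin[OF as] m by blast
    show "\<And>j. (1::complex) \<noteq> 0" by simp
    fix j
    have a: "2*(n + j*m - m) \<noteq> m" using H[rule_format, of j] by (simp add: algebra_simps)
    have b: "n + j*m - m \<noteq> 0" using ndt[of "j - 1"] by (simp add: algebra_simps)
    show "((of_int (n + j*m - m) - of_int m / 2) / of_int (n + j*m - m) :: complex) \<noteq> 0"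
      using half_ne[OF a] b by (metis divide_eq_0_iff of_int_eq_0_iff)
  next
    fix c :: complex assume "c \<noteq> 0"
    from LOC[of c] obtain u where u: "finite {n. fst u n \<noteq> 0}" "finite {n. snd u n \<noteq> 0}"
      "\<forall>j. c * fst (\<Delta> (Lb m)) (n + j*m) = fst u (n + j*m) + c * (of_int (n + j*m - 2*m) / of_int (n + j*m - m)) * fst u (n + (j-1)*m)"
      "\<forall>j. c * snd (\<Delta> (Lb m)) (n + j*m) = snd u (n + j*m) + c * ((of_int (n + j*m - m) - of_int m / 2) / of_int (n + j*m - m)) * snd u (n + (j-1)*m)"
      by blast
    show "\<exists>U. finite {j. U j \<noteq> 0} \<and> (\<forall>j. c * snd (\<Delta> (Lb m)) (n + j*m) = 1 * U j + c * ((of_int (n + j*m - m) - of_int m / 2) / of_int (n + j*m - m)) * U (j - 1))"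
      by (rule exI[of _ "\<lambda>j. snd u (n + j*m)"]) (use u fin_shift m in auto)
  qed
  thus "snd (\<Delta> (Lb m)) n = 0" by simp
qed


lemma half0: "2*X = Y \<Longrightarrow> (of_int X - of_int Y / 2 :: complex) = 0"
proof -
  assume a: "2*X = Y"
  have "(of_int (2*X) :: complex) = of_int Y" using a by (rule arg_cong)
  hence "(of_int Y :: complex) = 2 * of_int X" by simp
  thus ?thesis by simp
qed

lemma ratio_ne: "2*X \<noteq> Y \<Longrightarrow> X \<noteq> 0 \<Longrightarrow> ((of_int X - of_int Y / 2) / of_int X :: complex) \<noteq> 0"
  using half_ne by (metis divide_eq_0_iff of_int_eq_0_iff)

lemma mne: "(m::int) \<noteq> 0 \<Longrightarrow> t \<noteq> s \<Longrightarrow> m*t \<noteq> m*s" by simp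

lemma S_up:
  assumes LD: "sv_local_derivation \<Delta>" and Z: "\<Delta> (Lb 0) = sv_zero" and m: "m \<noteq> 0"
    and h: "2*n0 = 3*m"
  shows "snd (\<Delta> (Lb m)) (n0 + int k * m) = 0"
proof -
  have linD: "sv_linear \<Delta>" using LD by (simp add: sv_local_derivation_def)
  have as: "\<Delta> (Lb m) \<in> sv_space" using linD Lb_space by (simp add: sv_linear_def)
  have e2: "2*(n0 + int k*m) = m*(3 + 2*int k)" for k using h by (simp add: algebra_simps)
  have e3: "2*(n0 + int k*m - m) = m*(1 + 2*int k)" for k using h by (simp add: algebra_simps)
  have nz0: "n0 + int k*m \<noteq> 0" for k
  proof
    assume "n0 + int k*m = 0"
    hence "m*(3 + 2*int k) = m*0" using e2[of k] by simp
    thus False using mne[OF m, of "3 + 2*int k" 0] by simp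
  qed
  have nzm: "n0 + int k*m \<noteq> m" for k
  proof
    assume "n0 + int k*m = m"
    hence "m*(3 + 2*int k) = m*2" using e2[of k] by simp
    thus False using mne[OF m, of "3 + 2*int k" 2] by simp
  qed
  have agen: "2*(n0 + int K*m - m) \<noteq> m" if "K > 0" for K
  proof
    assume "2*(n0 + int K*m - m) = m"
    hence "m*(1 + 2*int K) = m*1" using e3[of K] by simp
    thus False using mne[OF m, of "1 + 2*int K" 1] that by simp
  qed
  have bgen: "n0 + int K*m - m \<noteq> 0" for K
  proof
    assume "n0 + int K*m - m = 0"
    hence "m*(1 + 2*int K) = m*0" using e3[of K] by simp
    thus False using mne[OF m, of "1 + 2*int K" 0] by simp
  qed
  show ?thesis
  proof (rule chain_nat[where A = "\<lambda>k. snd (\<Delta> (Lb m)) (n0 + int k * m)" and \<alpha> = "\<lambda>_. 1"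
      and \<beta> = "\<lambda>k. (of_int (n0 + int k*m - m) - of_int m / 2) / of_int (n0 + int k*m - m)"])
    have inj: "inj (\<lambda>k::nat. n0 + int k * m)" using m by (auto simp: inj_def)
    have "{k. snd (\<Delta> (Lb m)) (n0 + int k * m) \<noteq> 0} = (\<lambda>k::nat. n0 + int k * m) -` {n. snd (\<Delta> (Lb m)) n \<noteq> 0}" by auto
    thus "finite {k. snd (\<Delta> (Lb m)) (n0 + int k * m) \<noteq> 0}"
      using finite_vimageI[OF conjunct2[OF space_fin[OF as]] inj] by simp
    show "\<And>k. (1::complex) \<noteq> 0" by simp
    fix k
    have a: "2*(n0 + int (Suc k)*m - m) \<noteq> m" using agen[of "Suc k"] by simp
    have b: "n0 + int (Suc k)*m - m \<noteq> 0" by (rule bgen)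
    show "((of_int (n0 + int (Suc k)*m - m) - of_int m / 2) / of_int (n0 + int (Suc k)*m - m) :: complex) \<noteq> 0"
      by (rule ratio_ne[OF a b])
  next
    fix c :: complex assume "c \<noteq> 0"
    obtain u where u: "finite {n. fst u n \<noteq> 0}" "finite {n. snd u n \<noteq> 0}"
      "\<forall>n. n \<noteq> 0 \<longrightarrow> n \<noteq> m \<longrightarrow>
       1 * fst (\<Delta> (Lb 0)) n + c * fst (\<Delta> (Lb m)) n =
       1 * (fst u (n - 0) * of_int (n - 2*0) / of_int (n - 0))
     + c * (fst u (n - m) * of_int (n - 2*m) / of_int (n - m))"
      "\<forall>n. n \<noteq> 0 \<longrightarrow> n \<noteq> m \<longrightarrow>
       1 * snd (\<Delta> (Lb 0)) n + c * snd (\<Delta> (Lb m)) n =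
       1 * (snd u (n - 0) * (of_int (n - 0) - of_int 0 / 2) / of_int (n - 0))
     + c * (snd u (n - m) * (of_int (n - m) - of_int m / 2) / of_int (n - m))"
      using loc[OF LD, of 0 m 1 c] by blast
    have E: "c * snd (\<Delta> (Lb m)) n = snd u n + c * ((of_int (n - m) - of_int m / 2) / of_int (n - m)) * snd u (n - m)"
      if "n \<noteq> 0" "n \<noteq> m" for n
    proof -
      have nc: "(of_int n :: complex) \<noteq> 0" using that(1) by simp
      show ?thesis using u(4)[rule_format, OF that] nc Z by (simp add: sv_zero_def)
    qed
    show "\<exists>U. finite {k. U k \<noteq> 0} \<and> c * snd (\<Delta> (Lb m)) (n0 + int 0 * m) = 1 * U 0 \<and>
       (\<forall>k. c * snd (\<Delta> (Lb m)) (n0 + int (Suc k) * m) = 1 * U (Suc k) +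
          c * ((of_int (n0 + int (Suc k)*m - m) - of_int m / 2) / of_int (n0 + int (Suc k)*m - m)) * U k)"
    proof (intro exI conjI allI)
      have inj: "inj (\<lambda>k::nat. n0 + int k * m)" using m by (auto simp: inj_def)
      have "{k. snd u (n0 + int k * m) \<noteq> 0} = (\<lambda>k::nat. n0 + int k * m) -` {n. snd u n \<noteq> 0}" by auto
      thus "finite {k. snd u (n0 + int k * m) \<noteq> 0}" using finite_vimageI[OF u(2) inj] by simp
      have z: "(of_int (n0 - m) - of_int m / 2 :: complex) = 0" by (rule half0) (use h in simp)
      show "c * snd (\<Delta> (Lb m)) (n0 + int 0 * m) = 1 * snd u (n0 + int 0 * m)"
        using E[OF nz0[of 0] nzm[of 0]] z by simp
      fix k
      have ix: "n0 + int (Suc k) * m - m = n0 + int k * m" by (simp add: algebra_simps)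
      show "c * snd (\<Delta> (Lb m)) (n0 + int (Suc k) * m) = 1 * snd u (n0 + int (Suc k) * m) +
          c * ((of_int (n0 + int (Suc k)*m - m) - of_int m / 2) / of_int (n0 + int (Suc k)*m - m)) * snd u (n0 + int k * m)"
        using E[OF nz0[of "Suc k"] nzm[of "Suc k"]] unfolding ix by simp
    qed
  qed
qed


lemma S_low:
  assumes LD: "sv_local_derivation \<Delta>" and Z: "\<Delta> (Lb 0) = sv_zero" and m: "m \<noteq> 0"
    and h: "2*n0 = 3*m"
  shows "snd (\<Delta> (Lb m)) (n0 - (int i + 1) * m) = 0"
proof -
  have m2: "2*m \<noteq> 0" using m by simp
  have bz: "snd (\<Delta> (Lb (2*m))) (n0 - t*m) = 0" for t
  proof (rule S1(2)[OF LD Z m2])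
    show "\<not> 2*m dvd n0 - t*m"
    proof
      assume "2*m dvd n0 - t*m"
      then obtain s where s: "n0 - t*m = 2*m*s" by (auto simp: dvd_def)
      have "m*(3 - 2*t) = m*(4*s)"
      proof -
        have "m*(3 - 2*t) = 2*(n0 - t*m)" using h by (simp add: algebra_simps)
        also have "\<dots> = m*(4*s)" using s by simp
        finally show ?thesis .
      qed
      hence "3 - 2*t = 4*s" using m by simp
      thus False by presburger
    qed
    show "\<forall>j. 2*(n0 - t*m + j*(2*m)) \<noteq> 3*(2*m)"
    proof (intro allI notI)
      fix j assume a: "2*(n0 - t*m + j*(2*m)) = 3*(2*m)"
      have "m*(3 - 2*t + 4*j) = 2*(n0 - t*m + j*(2*m))" using h by (simp add: algebra_simps)
      hence "m*(3 - 2*t + 4*j) = m*6" using a by simp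
      hence "3 - 2*t + 4*j = 6" using m by simp
      thus False by presburger
    qed
  qed
  have az: "snd (\<Delta> (Lb m)) n0 = 0" using S_up[OF LD Z m h, of 0] by simp
  let ?n = "\<lambda>K::nat. n0 - (int K + 1) * m"
  have en: "2*(?n K) = m*(1 - 2*int K)" for K using h by (simp add: algebra_simps)
  have e1: "2*(?n K - m) = m*(-1 - 2*int K)" for K using h by (simp add: algebra_simps)
  have e2: "2*(?n K - 2*m) = m*(-3 - 2*int K)" for K using h by (simp add: algebra_simps)
  have nm: "?n K \<noteq> m" for K
  proof
    assume "?n K = m" hence "m*(1 - 2*int K) = m*2" using en[of K] by simp
    hence "1 - 2*int K = 2" using m by simp
    thus False by presburger
  qed
  have n2m: "?n K \<noteq> 2*m" for K
  proof
    assume "?n K = 2*m" hence "m*(1 - 2*int K) = m*4" using en[of K] by simp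
    hence "1 - 2*int K = 4" using m by simp
    thus False by presburger
  qed
  have al1: "2*(?n K - 2*m) \<noteq> 2*m" for K
  proof
    assume "2*(?n K - 2*m) = 2*m" hence "m*(-3 - 2*int K) = m*2" using e2[of K] by simp
    hence "-3 - 2*int K = 2" using m by simp
    thus False by presburger
  qed
  have al2: "?n K - 2*m \<noteq> 0" for K
  proof
    assume "?n K - 2*m = 0" hence "m*(-3 - 2*int K) = m*0" using e2[of K] by simp
    hence "-3 - 2*int K = 0" using m by simp
    thus False by presburger
  qed
  have be1: "2*(?n K - m) \<noteq> m" for K
  proof
    assume "2*(?n K - m) = m" hence "m*(-1 - 2*int K) = m*1" using e1[of K] by simp
    hence "-1 - 2*int K = 1" using m by simp
    thus False by presburger
  qed
  have be2: "?n K - m \<noteq> 0" for K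
  proof
    assume "?n K - m = 0" hence "m*(-1 - 2*int K) = m*0" using e1[of K] by simp
    hence "-1 - 2*int K = 0" using m by simp
    thus False by presburger
  qed
  have as: "\<Delta> (Lb m) \<in> sv_space" using LD Lb_space by (simp add: sv_linear_def sv_local_derivation_def)
  show ?thesis
  proof (rule chain_nat[where A = "\<lambda>K. snd (\<Delta> (Lb m)) (?n K)"
      and \<alpha> = "\<lambda>K. (of_int (?n K - 2*m) - of_int (2*m) / 2) / of_int (?n K - 2*m)"
      and \<beta> = "\<lambda>K. (of_int (?n K - m) - of_int m / 2) / of_int (?n K - m)"])
    have inj: "inj ?n" using m by (auto simp: inj_def)
    have "{K. snd (\<Delta> (Lb m)) (?n K) \<noteq> 0} = ?n -` {n. snd (\<Delta> (Lb m)) n \<noteq> 0}" by auto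
    thus "finite {K. snd (\<Delta> (Lb m)) (?n K) \<noteq> 0}"
      using finite_vimageI[OF conjunct2[OF space_fin[OF as]] inj] by simp
    show "\<And>K. ((of_int (?n K - 2*m) - of_int (2*m) / 2) / of_int (?n K - 2*m) :: complex) \<noteq> 0"
      by (rule ratio_ne[OF al1 al2])
    show "\<And>K. ((of_int (?n (Suc K) - m) - of_int m / 2) / of_int (?n (Suc K) - m) :: complex) \<noteq> 0"
      by (rule ratio_ne[OF be1 be2])
  next
    fix c :: complex assume "c \<noteq> 0"
    obtain u where u: "finite {n. fst u n \<noteq> 0}" "finite {n. snd u n \<noteq> 0}"
      "\<forall>n. n \<noteq> m \<longrightarrow> n \<noteq> 2*m \<longrightarrow>
       c * fst (\<Delta> (Lb m)) n + 1 * fst (\<Delta> (Lb (2*m))) n =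
       c * (fst u (n - m) * of_int (n - 2*m) / of_int (n - m))
     + 1 * (fst u (n - 2*m) * of_int (n - 2*(2*m)) / of_int (n - 2*m))"
      "\<forall>n. n \<noteq> m \<longrightarrow> n \<noteq> 2*m \<longrightarrow>
       c * snd (\<Delta> (Lb m)) n + 1 * snd (\<Delta> (Lb (2*m))) n =
       c * (snd u (n - m) * (of_int (n - m) - of_int m / 2) / of_int (n - m))
     + 1 * (snd u (n - 2*m) * (of_int (n - 2*m) - of_int (2*m) / 2) / of_int (n - 2*m))"
      using loc[OF LD, of m "2*m" c 1] by blast
    have E: "c * snd (\<Delta> (Lb m)) n = ((of_int (n - 2*m) - of_int (2*m) / 2) / of_int (n - 2*m)) * snd u (n - 2*m)
       + c * ((of_int (n - m) - of_int m / 2) / of_int (n - m)) * snd u (n - m)"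
      if "n \<noteq> m" "n \<noteq> 2*m" "snd (\<Delta> (Lb (2*m))) n = 0" for n
      using u(4)[rule_format, OF that(1,2)] that(3) by (simp add: mult_ac add_ac)
    have u0: "snd u (n0 - 2*m) = 0"
    proof -
      have a1: "n0 \<noteq> m" using nm[of 0] h by auto
      have a2: "n0 \<noteq> 2*m" using h m by auto
      have z: "(of_int (n0 - m) - of_int m / 2 :: complex) = 0" by (rule half0) (use h in simp)
      have e: "c * snd (\<Delta> (Lb m)) n0 = ((of_int (n0 - 2*m) - of_int (2*m) / 2) / of_int (n0 - 2*m)) * snd u (n0 - 2*m)
       + c * ((of_int (n0 - m) - of_int m / 2) / of_int (n0 - m)) * snd u (n0 - m)"
        using E[OF a1 a2] bz[of 0] by simp
      have "0 = ((of_int (n0 - 2*m) - of_int (2*m) / 2) / of_int (n0 - 2*m)) * snd u (n0 - 2*m)"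
        using e unfolding z az by simp
      moreover have "((of_int (n0 - 2*m) - of_int (2*m) / 2) / of_int (n0 - 2*m) :: complex) \<noteq> 0"
        by (rule ratio_ne) (use h m in auto)
      ultimately show ?thesis by simp
    qed
    show "\<exists>U. finite {k. U k \<noteq> 0} \<and>
        c * snd (\<Delta> (Lb m)) (?n 0) = ((of_int (?n 0 - 2*m) - of_int (2*m) / 2) / of_int (?n 0 - 2*m)) * U 0 \<and>
       (\<forall>k. c * snd (\<Delta> (Lb m)) (?n (Suc k)) = ((of_int (?n (Suc k) - 2*m) - of_int (2*m) / 2) / of_int (?n (Suc k) - 2*m)) * U (Suc k) +
          c * ((of_int (?n (Suc k) - m) - of_int m / 2) / of_int (?n (Suc k) - m)) * U k)"
    proof (intro exI conjI allI)
      have inj: "inj (\<lambda>K. ?n K - 2*m)" using m by (auto simp: inj_def)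
      have "{K. snd u (?n K - 2*m) \<noteq> 0} = (\<lambda>K. ?n K - 2*m) -` {n. snd u n \<noteq> 0}" by auto
      thus "finite {K. snd u (?n K - 2*m) \<noteq> 0}" using finite_vimageI[OF u(2) inj] by simp
      have i0: "?n 0 - m = n0 - 2*m" by simp
      have b0: "snd (\<Delta> (Lb (2*m))) (?n 0) = 0" using bz[of 1] by simp
      show "c * snd (\<Delta> (Lb m)) (?n 0) = ((of_int (?n 0 - 2*m) - of_int (2*m) / 2) / of_int (?n 0 - 2*m)) * snd u (?n 0 - 2*m)"
        using E[OF nm n2m b0] u0 unfolding i0 by simp
      fix k
      have ik: "?n (Suc k) - m = ?n k - 2*m" by (simp add: algebra_simps)
      have bk: "snd (\<Delta> (Lb (2*m))) (?n (Suc k)) = 0" using bz[of "int (Suc k) + 1"] by simp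
      show "c * snd (\<Delta> (Lb m)) (?n (Suc k)) = ((of_int (?n (Suc k) - 2*m) - of_int (2*m) / 2) / of_int (?n (Suc k) - 2*m)) * snd u (?n (Suc k) - 2*m) +
          c * ((of_int (?n (Suc k) - m) - of_int m / 2) / of_int (?n (Suc k) - m)) * snd u (?n k - 2*m)"
        using E[OF nm n2m bk] unfolding ik by simp
    qed
  qed
qed


theorem lemma3p1:
  fixes \<Delta> :: "sv \<Rightarrow> sv" and m :: int
  assumes "sv_local_derivation \<Delta>"
    and "\<Delta> (Lb 0) = sv_zero"
    and "m \<noteq> 0"
  shows "\<forall>n. \<not> m dvd n \<longrightarrow> fst (\<Delta> (Lb m)) n = 0 \<and> snd (\<Delta> (Lb m)) n = 0"
proof (intro allI impI conjI)
  fix n assume nd: "\<not> m dvd n"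
  show "fst (\<Delta> (Lb m)) n = 0" by (rule S1(1)[OF assms nd])
  show "snd (\<Delta> (Lb m)) n = 0"
  proof (cases "\<forall>j. 2*(n + j*m) \<noteq> 3*m")
    case True then show ?thesis by (rule S1(2)[OF assms nd])
  next
    case False
    then obtain j where h: "2*(n + j*m) = 3*m" by blast
    show ?thesis
    proof (cases "j \<le> 0")
      case True
      have e: "(n + j*m) + int (nat (-j)) * m = n" using True by (simp add: algebra_simps)
      show ?thesis using S_up[OF assms h, of "nat (-j)"] unfolding e .
    next
      case False
      have e: "(n + j*m) - (int (nat (j - 1)) + 1) * m = n" using False by (simp add: algebra_simps)
      show ?thesis using S_low[OF assms h, of "nat (j - 1)"] unfolding e .
    qed
  qed
qed

end
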